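(* Let $\mathbf{k}$ be a field, let $d \geq 1$, let $A = \mathbf{k}^{d}$ (the product of $d$ copies of $\mathbf{k}$, with componentwise operations and unit $1_A = (1,\dots,1)$), let $M$ be a finite-dimensional $\mathbf{k}$-vector space, and let $\phi : A \to \mathrm{End}_{\mathbf{k}}(M)$ be a $\mathbf{k}$-linear map. Let $n > 2$ be a natural number and assume that $\mathbf{k}$ contains $n$ distinct $n$-th roots of unity (equivalently, $\mathbf{k}$ contains a primitive $n$-th root of unity). If $\phi(1_A) = \mathrm{id}_M$ and for every $a \in A$ with $a^n = 1_A$ we have $\phi(a)^n = \mathrm{id}_M$, then $\phi$ is a (unital) $\mathbf{k}$-algebra homomorphism. *)

theory Defs
  imports "HOL-Analysis.Analysis"
begin

end

theory Submission
  imports Defs "HOL-Computational_Algebra.Polynomial" "HOL-Computational_Algebra.Primes"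
begin


lemma roots_bound:
  assumes "r \<ge> 1"
  shows "finite {z::'k::field. z^r = 1} \<and> card {z::'k::field. z^r = 1} \<le> r"
proof -
  define p :: "'k poly" where "p = monom 1 r - 1"
  have set: "{z::'k. z^r = 1} = {x. poly p x = 0}" by (simp add: p_def poly_monom)
  have "coeff p r = 1" using assms by (simp add: p_def)
  hence p0: "p \<noteq> 0" by auto
  have "degree p \<le> r" unfolding p_def
    by (intro degree_diff_le) (auto simp: degree_monom_le)
  with card_poly_roots_bound[OF p0] poly_roots_finite[OF p0] show ?thesis by (simp add: set)
qed

lemma n_nonzero:
  assumes "n \<ge> 1" and card: "card {z::'k::field. z^n = 1} = n"
  shows "(of_nat n :: 'k) \<noteq> 0"
proof
  assume h: "(of_nat n :: 'k) = 0"
  hence dv: "CHAR('k) dvd n" using of_nat_eq_0_iff_char_dvd by blast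
  hence cp: "CHAR('k) > 0" using assms(1) by (cases "CHAR('k)") auto
  hence pr: "prime CHAR('k)" by (rule prime_CHAR_semidom)
  obtain m where nm: "n = CHAR('k) * m" using dv by blast
  have m1: "m \<ge> 1" using nm assms(1) by (cases m) auto
  have p2: "CHAR('k) \<ge> 2" using pr prime_ge_2_nat by blast
  have mlt: "m < n" using nm m1 p2 by simp
  have sub: "{z::'k. z^n = 1} \<subseteq> {z. z^m = 1}"
  proof
    fix z :: 'k assume "z \<in> {z. z^n = 1}"
    hence "(z^m)^CHAR('k) = 1" by (simp add: nm power_mult[symmetric] mult.commute)
    moreover have "(z^m + (-1))^CHAR('k) = (z^m)^CHAR('k) + (-1)^CHAR('k)"
      by (rule freshmans_dream[OF pr refl])
    moreover have "(-1::'k)^CHAR('k) = - (1^CHAR('k))"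
      by (rule minus_power_prime_CHAR[OF refl pr])
    ultimately have "(z^m - 1)^CHAR('k) = 0" by simp
    thus "z \<in> {z. z^m = 1}" by simp
  qed
  have "n \<le> card {z::'k. z^m = 1}"
    using card_mono[OF conjunct1[OF roots_bound[OF m1]] sub] card by simp
  also have "\<dots> \<le> m" using roots_bound[OF m1] by blast
  finally show False using mlt by simp
qed

lemma root_sum:
  assumes n1: "n \<ge> 1" and card: "card {z::'k::field. z^n = 1} = n"
  shows "(\<Sum>z\<in>{z::'k. z^n = 1}. z^m) = (if n dvd m then of_nat n else 0)"
proof -
  let ?U = "{z::'k. z^n = 1}"
  have fin: "finite ?U" using roots_bound[OF n1] by blast
  show ?thesis
  proof (cases "n dvd m")
    case True
    then obtain q where q: "m = n * q" by blast
    have "(\<Sum>z\<in>?U. z^m) = (\<Sum>z\<in>?U. 1)"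
      by (intro sum.cong) (auto simp: q power_mult)
    then show ?thesis using True card by simp
  next
    case False
    define r where "r = m mod n"
    have r0: "r \<noteq> 0" and rn: "r < n" using False n1 by (auto simp: r_def mod_eq_0_iff_dvd)
    have eq: "z^m = z^r" if "z \<in> ?U" for z
    proof -
      have "m = n * (m div n) + r" by (simp add: r_def)
      hence "z^m = (z^n)^(m div n) * z^r" by (metis power_add power_mult)
      thus ?thesis using that by simp
    qed
    obtain w where w: "w \<in> ?U" "w^r \<noteq> 1"
    proof (rule ccontr)
      assume "\<not> thesis"
      with that have "?U \<subseteq> {z. z^r = 1}" by blast
      hence "n \<le> card {z::'k. z^r = 1}"
        using card_mono[OF conjunct1[OF roots_bound] ] card r0 by (metis One_nat_def Suc_leI neq0_conv)
      also have "\<dots> \<le> r" using roots_bound r0 by (metis One_nat_def Suc_leI neq0_conv)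
      finally show False using rn by simp
    qed
    have w0: "w \<noteq> 0" using w n1 by (auto simp: power_0_left)
    have bij: "bij_betw (\<lambda>z. w * z) ?U ?U"
    proof (rule bij_betwI[where g = "\<lambda>z. z / w"])
      show "(\<lambda>z. w * z) \<in> ?U \<rightarrow> ?U" using w by (auto simp: power_mult_distrib)
      show "(\<lambda>z. z / w) \<in> ?U \<rightarrow> ?U" using w by (auto simp: power_divide)
    qed (use w0 in auto)
    let ?S = "\<Sum>z\<in>?U. z^r"
    have "?S = (\<Sum>z\<in>?U. (w*z)^r)"
      using sum.reindex_bij_betw[OF bij, of "\<lambda>z. z^r"] by simp
    also have "\<dots> = w^r * ?S" by (simp add: power_mult_distrib sum_distrib_left)
    finally have "(w^r - 1) * ?S = 0" by (simp add: algebra_simps)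
    hence "?S = 0" using w by simp
    moreover have "(\<Sum>z\<in>?U. z^m) = ?S" by (intro sum.cong) (auto simp: eq)
    ultimately show ?thesis using False by simp
  qed
qed

lemma affine_escape:
  assumes n2: "n \<ge> 2" and card: "card {z::'k::field. z^n = 1} = n"
  shows "\<exists>a b. a^n = 1 \<and> b^n = 1 \<and> (a + b - 1)^n \<noteq> (1::'k)"
proof (rule ccontr)
  assume H: "\<not> ?thesis"
  let ?U = "{z::'k. z^n = 1}"
  have n1: "n \<ge> 1" using n2 by simp
  have fin: "finite ?U" using roots_bound[OF n1] by blast
  have nz: "(of_nat n :: 'k) \<noteq> 0" by (rule n_nonzero[OF n1 card])
  obtain w where w: "w \<in> ?U" "w \<noteq> 1"
  proof (rule ccontr)
    assume "\<not> thesis"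
    with that have "?U \<subseteq> {1}" by blast
    hence "card ?U \<le> card {1::'k}" by (intro card_mono) auto
    thus False using card n2 by simp
  qed
  let ?f = "\<lambda>z. z + (w - 1)"
  have img: "?f ` ?U = ?U"
  proof (rule endo_inj_surj[OF fin])
    show "?f ` ?U \<subseteq> ?U" using H w by (auto simp: diff_add_eq add_diff_eq)
    show "inj_on ?f ?U" by (auto simp: inj_on_def)
  qed
  have "(\<Sum>z\<in>?U. z) = (\<Sum>z\<in>?f ` ?U. z)" by (simp only: img)
  also have "\<dots> = (\<Sum>z\<in>?U. z + (w - 1))"
    by (subst sum.reindex) (auto simp: inj_on_def)
  also have "\<dots> = (\<Sum>z\<in>?U. z) + of_nat n * (w - 1)"
    by (simp add: sum.distrib card)
  finally have "of_nat n * (w - 1) = 0" by simp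
  thus False using nz w by simp
qed




definition ev :: "('k::field \<Rightarrow> 'm::ab_group_add \<Rightarrow> 'm) \<Rightarrow> ('m \<Rightarrow> 'm) \<Rightarrow> 'k poly \<Rightarrow> 'm \<Rightarrow> 'm" where
  "ev sc P p = fold_coeffs (\<lambda>a f x. sc a x + P (f x)) p (\<lambda>x. 0)"

locale opx = vector_space sc for sc :: "'k::field \<Rightarrow> 'm::ab_group_add \<Rightarrow> 'm" +
  fixes P :: "'m \<Rightarrow> 'm"
  assumes lin: "Vector_Spaces.linear sc sc P"
begin

lemma P_add: "P (x + y) = P x + P y" and P_sc: "P (sc c x) = sc c (P x)"
  using lin by (auto simp: Vector_Spaces.linear_iff)

lemma P_0 [simp]: "P 0 = 0"
  by (metis add_cancel_right_right P_add)

lemma P_minus: "P (- x) = - P x"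
  by (metis P_add P_0 add.right_inverse add_eq_0_iff)

lemma P_diff: "P (x - y) = P x - P y"
  using P_add[of x "-y"] by (simp add: P_minus)

lemma ev_0 [simp]: "ev sc P 0 = (\<lambda>x. 0)"
  by (simp add: ev_def)

lemma ev_pCons: "ev sc P (pCons a p) = (\<lambda>x. sc a x + P (ev sc P p x))"
proof (cases "a = 0 \<and> p = 0")
  case True
  then show ?thesis by (simp add: ev_def)
next
  case False
  then show ?thesis by (auto simp: ev_def)
qed

lemma ev_add: "ev sc P (p + q) = (\<lambda>x. ev sc P p x + ev sc P q x)"
proof (induction p q rule: poly_induct2)
  case 0 then show ?case by simp
next
  case (pCons a p b q)
  then show ?case by (simp add: ev_pCons P_add scale_left_distrib algebra_simps)
qed

lemma ev_smult: "ev sc P (smult c p) = (\<lambda>x. sc c (ev sc P p x))"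
  by (induction p) (simp_all add: ev_pCons P_sc scale_right_distrib)

lemma ev_mult: "ev sc P (p * q) = (\<lambda>x. ev sc P p (ev sc P q x))"
  by (induction p) (simp_all add: ev_pCons ev_add ev_smult)

lemma ev_const: "ev sc P [:c:] = (\<lambda>x. sc c x)"
  by (simp add: ev_pCons)

lemma ev_1: "ev sc P 1 = (\<lambda>x. x)"
  by (simp add: one_pCons ev_pCons)

lemma ev_X: "ev sc P [:0,1:] = P"
  by (simp add: ev_pCons)

lemma ev_uminus: "ev sc P (- p) = (\<lambda>x. - ev sc P p x)"
proof -
  have "- p = smult (-1) p" by simp
  then show ?thesis by (simp only: ev_smult) simp
qed

lemma ev_diff: "ev sc P (p - q) = (\<lambda>x. ev sc P p x - ev sc P q x)"
  using ev_add[of p "-q"] by (simp add: ev_uminus)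

lemma ev_power: "ev sc P (p ^ k) = (ev sc P p) ^^ k"
  by (induction k) (simp_all add: ev_1 ev_mult fun_eq_iff)

lemma ev_sum: "ev sc P (\<Sum>i\<in>A. f i) = (\<lambda>x. \<Sum>i\<in>A. ev sc P (f i) x)"
  by (induction A rule: infinite_finite_induct) (simp_all add: ev_add)

lemma ev_at0 [simp]: "ev sc P p 0 = 0"
  by (induction p) (simp_all add: ev_pCons)

lemma ev_of_nat: "ev sc P (of_nat m) = (\<lambda>x. sc (of_nat m) x)"
  by (simp add: of_nat_poly ev_const)

end




lemma smult_sum_right: "smult a (\<Sum>i\<in>S. f i) = (\<Sum>i\<in>S. smult a (f i))"
  by (induct S rule: infinite_finite_induct) (auto simp: smult_add_right)

lemma fourier:
  fixes n j :: nat
  assumes n1: "n \<ge> 1" and card: "card {z::'k::field. z^n = 1} = n" and j: "1 \<le> j" "j < n"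
  shows "(\<Sum>\<zeta>\<in>{z::'k. z^n = 1}. smult (\<zeta>^j) ((smult \<zeta> [:0,1:] + (1 - [:0,1:]))^n - 1))
         = smult (of_nat n) (of_nat (n choose (n-j)) * [:0,1:]^(n-j) * (1 - [:0,1::'k:])^(n-(n-j)))"
proof -
  let ?U = "{z::'k. z^n = 1}"
  let ?X = "[:0,1::'k:]" and ?Y = "1 - [:0,1::'k:]"
  define c where "c k = of_nat (n choose k) * ?X^k * ?Y^(n-k)" for k
  have bin: "(smult \<zeta> ?X + ?Y)^n = (\<Sum>k\<le>n. smult (\<zeta>^k) (c k))" for \<zeta>
    unfolding binomial_ring c_def
    by (intro sum.cong refl) (simp only: smult_power mult_smult_left mult_smult_right mult.assoc)
  have "(\<Sum>\<zeta>\<in>?U. smult (\<zeta>^j) ((smult \<zeta> ?X + ?Y)^n - 1))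
      = (\<Sum>\<zeta>\<in>?U. (\<Sum>k\<le>n. smult (\<zeta>^(j+k)) (c k)) - smult (\<zeta>^j) 1)"
    by (intro sum.cong refl) (simp only: bin smult_diff_right smult_sum_right smult_smult power_add)
  also have "\<dots> = (\<Sum>k\<le>n. smult (\<Sum>\<zeta>\<in>?U. \<zeta>^(j+k)) (c k)) - smult (\<Sum>\<zeta>\<in>?U. \<zeta>^j) 1"
    by (simp only: sum_subtractf smult_sum) (subst sum.swap, rule refl)
  also have "(\<Sum>\<zeta>\<in>?U. \<zeta>^j) = 0"
    using root_sum[OF n1 card, of j] j by (auto dest: dvd_imp_le)
  also have "(\<Sum>k\<le>n. smult (\<Sum>\<zeta>\<in>?U. \<zeta>^(j+k)) (c k))
      = (\<Sum>k\<le>n. if k = n - j then smult (of_nat n) (c k) else 0)"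
  proof (intro sum.cong refl)
    fix k assume k: "k \<in> {..n}"
    have "n dvd (j + k) \<longleftrightarrow> k = n - j"
    proof
      assume "n dvd (j + k)"
      then obtain t where t: "j + k = n * t" by blast
      have t1: "t \<ge> 1" using t j by (cases t) auto
      have "j + k < n * 2" using j k by auto
      hence "n * t < n * 2" using t by simp
      hence t2: "t < 2" by simp
      have "t = 1" using t1 t2 by simp
      then show "k = n - j" using t by simp
    qed (use j in simp)
    then show "smult (\<Sum>\<zeta>\<in>?U. \<zeta>^(j+k)) (c k) = (if k = n - j then smult (of_nat n) (c k) else 0)"
      using root_sum[OF n1 card, of "j+k"] by simp
  qed
  also have "\<dots> = smult (of_nat n) (c (n - j))"
    using sum.delta[of "{..n}" "n-j" "\<lambda>k. smult (of_nat n) (c k)"] by simp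
  finally show ?thesis by (simp add: c_def)
qed

context opx
begin

lemma ideal_mult:
  assumes "ev sc P f = (\<lambda>x. 0)"
  shows "ev sc P (f * g) = (\<lambda>x. 0)" "ev sc P (g * f) = (\<lambda>x. 0)"
  using assms by (simp_all add: ev_mult)

lemma idem_from_ideal:
  assumes n2: "n \<ge> 2"
    and f1: "ev sc P ([:0,1:] * (1 - [:0,1:])^(n-1)) = (\<lambda>x. 0)"
    and f2: "ev sc P ([:0,1:]^(n-1) * (1 - [:0,1:])) = (\<lambda>x. 0)"
  shows "P (P x) = P x"
proof -
  let ?u = "[:0,1::'k:]" and ?v = "1 - [:0,1::'k:]"
  have main: "ev sc P (?u^a * ?v^b) = (\<lambda>x. 0)" if "a \<ge> 1" "b \<ge> 1" for a b
    using that
  proof (induction "2*n - 2 - (a+b)" arbitrary: a b rule: less_induct)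
    case less
    show ?case
    proof (cases "a + b \<ge> 2*n - 2")
      case True
      hence "a \<ge> n - 1 \<or> b \<ge> n - 1" by linarith
      then show ?thesis
      proof
        assume a: "a \<ge> n - 1"
        obtain a' where a': "a = (n-1) + a'" using a le_Suc_ex by blast
        obtain b' where b': "b = Suc b'" using less.prems by (cases b) auto
        have "?u^a * ?v^b = (?u^(n-1) * ?v) * (?u^a' * ?v^b')"
          unfolding a' b' by (simp only: power_add power_Suc mult_ac)
        then show ?thesis using ideal_mult(1)[OF f2] by simp
      next
        assume b: "b \<ge> n - 1"
        obtain b' where b': "b = (n-1) + b'" using b le_Suc_ex by blast
        obtain a' where a': "a = Suc a'" using less.prems by (cases a) auto
        have "?u^a * ?v^b = (?u * ?v^(n-1)) * (?u^a' * ?v^b')"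
          unfolding a' b' by (simp only: power_add power_Suc mult_ac)
        then show ?thesis using ideal_mult(1)[OF f1] by simp
      qed
    next
      case False
      have e: "?u^a * ?v^b = ?u^(a+1) * ?v^b + ?u^a * ?v^(b+1)"
      proof -
        have "?u^a * ?v^b = ?u^a * ?v^b * (?u + ?v)" by simp
        also have "\<dots> = ?u^(a+1) * ?v^b + ?u^a * ?v^(b+1)"
          by (simp only: distrib_left power_add power_one_right mult_ac)
        finally show ?thesis .
      qed
      have "ev sc P (?u^(a+1) * ?v^b) = (\<lambda>x. 0)"
        using less.hyps[of "a+1" b] less.prems False by simp
      moreover have "ev sc P (?u^a * ?v^(b+1)) = (\<lambda>x. 0)"
        using less.hyps[of a "b+1"] less.prems False by simp
      ultimately show ?thesis by (simp only: e ev_add) simp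
    qed
  qed
  have "ev sc P (?u * ?v) x = 0" using main[of 1 1] by simp
  moreover have "ev sc P (?u * ?v) x = P x - P (P x)"
    by (simp only: ev_mult ev_diff ev_1 ev_X P_diff)
  ultimately show ?thesis by simp
qed

lemma idem:
  assumes n2: "n \<ge> 2" and card: "card {z::'k. z^n = 1} = n"
    and H: "\<And>\<zeta>. \<zeta>^n = 1 \<Longrightarrow> (\<lambda>x. x + sc (\<zeta> - 1) (P x)) ^^ n = id"
  shows "P (P x) = P x"
proof -
  let ?U = "{z::'k. z^n = 1}"
  let ?X = "[:0,1::'k:]" and ?Y = "1 - [:0,1::'k:]"
  have n1: "n \<ge> 1" using n2 by simp
  have nz: "(of_nat n :: 'k) \<noteq> 0" by (rule n_nonzero[OF n1 card])
  have evq: "ev sc P (smult \<zeta> ?X + ?Y) = (\<lambda>x. x + sc (\<zeta> - 1) (P x))" for \<zeta>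
    by (simp only: ev_add ev_smult ev_X ev_diff ev_1) (rule ext, simp add: scale_left_diff_distrib algebra_simps)
  have K: "ev sc P ((smult \<zeta> ?X + ?Y)^n - 1) = (\<lambda>x. 0)" if "\<zeta>^n = 1" for \<zeta>
    by (simp only: ev_diff ev_power evq ev_1 H[OF that]) simp
  have F: "ev sc P (of_nat (n choose (n-j)) * ?X^(n-j) * ?Y^(n-(n-j))) y = 0"
    if j: "1 \<le> j" "j < n" for j y
  proof -
    let ?c = "of_nat (n choose (n-j)) * ?X^(n-j) * ?Y^(n-(n-j))"
    have "ev sc P (\<Sum>\<zeta>\<in>?U. smult (\<zeta>^j) ((smult \<zeta> ?X + ?Y)^n - 1)) y
        = (\<Sum>\<zeta>\<in>?U. sc (\<zeta>^j) (ev sc P ((smult \<zeta> ?X + ?Y)^n - 1) y))"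
      by (simp only: ev_sum ev_smult)
    also have "\<dots> = (\<Sum>\<zeta>\<in>?U. sc (\<zeta>^j) 0)"
    proof (rule sum.cong[OF refl])
      fix \<zeta> assume "\<zeta> \<in> ?U"
      hence "\<zeta>^n = 1" by simp
      from K[OF this] show "sc (\<zeta>^j) (ev sc P ((smult \<zeta> ?X + ?Y)^n - 1) y) = sc (\<zeta>^j) 0"
        by (simp only: fun_eq_iff)
    qed
    also have "\<dots> = 0" by simp
    finally have "ev sc P (smult (of_nat n) ?c) y = 0"
      by (simp only: fourier[OF n1 card j])
    hence "sc (of_nat n) (ev sc P ?c y) = 0" by (simp only: ev_smult)
    thus ?thesis using nz by simp
  qed
  have f1: "ev sc P (?X * ?Y^(n-1)) = (\<lambda>x. 0)"
  proof
    fix y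
    have "ev sc P (of_nat (n choose (n-(n-1))) * ?X^(n-(n-1)) * ?Y^(n-(n-(n-1)))) y = 0"
      using F[of "n-1" y] n2 by simp
    hence "sc (of_nat n) (ev sc P (?X * ?Y^(n-1)) y) = 0"
      using n1 by (simp only: ev_mult ev_of_nat) (simp add: ev_mult)
    thus "ev sc P (?X * ?Y^(n-1)) y = 0" using nz by simp
  qed
  have chs: "n choose (n - Suc 0) = n" using binomial_symmetric[of 1 n] n1 by simp
  have f2: "ev sc P (?X^(n-1) * ?Y) = (\<lambda>x. 0)"
  proof
    fix y
    have "ev sc P (of_nat (n choose (n-1)) * ?X^(n-1) * ?Y^(n-(n-1))) y = 0"
      using F[of 1 y] n2 by simp
    hence "sc (of_nat n) (ev sc P (?X^(n-1) * ?Y) y) = 0"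
      using n1 by (simp only: ev_mult ev_of_nat) (simp add: ev_mult chs)
    thus "ev sc P (?X^(n-1) * ?Y) y = 0" using nz by simp
  qed
  show ?thesis by (rule idem_from_ideal[OF n2 f1 f2])
qed

end



lemma vec_power_nth: "((a::'k::field^'d) ^ m) $ i = (a $ i) ^ m"
  by (induction m) simp_all

lemma (in opx) P_sum: "P (\<Sum>i\<in>A. f i) = (\<Sum>i\<in>A. P (f i))"
  by (induction A rule: infinite_finite_induct) (simp_all add: P_add)

locale thmctx = vector_space scale for scale :: "'k::field \<Rightarrow> 'm::ab_group_add \<Rightarrow> 'm" +
  fixes \<phi> :: "'k ^ 'd \<Rightarrow> ('m \<Rightarrow> 'm)" and n :: nat
  assumes \<phi>_End: "\<And>a. Vector_Spaces.linear scale scale (\<phi> a)"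
    and \<phi>_add: "\<And>a b. \<phi> (a + b) = (\<lambda>x. \<phi> a x + \<phi> b x)"
    and \<phi>_scale: "\<And>c a. \<phi> (c *s a) = (\<lambda>x. scale c (\<phi> a x))"
    and n_gt: "n > 2"
    and roots: "card {z::'k. z^n = 1} = n"
    and unit: "\<phi> 1 = id"
    and pow: "\<And>a. a ^ n = 1 \<Longrightarrow> (\<phi> a) ^^ n = id"
begin

lemma opx: "opx scale (\<phi> a)"
  unfolding opx_def opx_axioms_def using \<phi>_End vector_space_axioms by auto

lemma lin_add: "\<phi> a (x + y) = \<phi> a x + \<phi> a y"
  and lin_sc: "\<phi> a (scale c x) = scale c (\<phi> a x)"
  and lin_0: "\<phi> a 0 = 0"
  and lin_minus: "\<phi> a (- x) = - \<phi> a x"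
  and lin_sum: "\<phi> a (\<Sum>i\<in>A. f i) = (\<Sum>i\<in>A. \<phi> a (f i))"
  using opx.P_add[OF opx] opx.P_sc[OF opx] opx.P_0[OF opx] opx.P_minus[OF opx] opx.P_sum[OF opx]
  by blast+

lemma \<phi>_zero: "\<phi> 0 = (\<lambda>x. 0)"
  using \<phi>_scale[of 0 0] by simp

lemma \<phi>_sum: "\<phi> (\<Sum>i\<in>A. f i) = (\<lambda>x. \<Sum>i\<in>A. \<phi> (f i) x)"
  by (induction A rule: infinite_finite_induct) (simp_all add: \<phi>_zero \<phi>_add)

lemma idem01:
  assumes u: "\<And>i. u $ i = 0 \<or> u $ i = 1"
  shows "\<phi> u (\<phi> u x) = \<phi> u x"
proof (rule opx.idem[OF opx])
  show "n \<ge> 2" using n_gt by simp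
  show "card {z::'k. z^n = 1} = n" by (rule roots)
  fix \<zeta> :: 'k assume z: "\<zeta>^n = 1"
  define a where "a = 1 + (\<zeta> - 1) *s u"
  have "(a$i)^n = 1" for i using u[of i] z by (auto simp: a_def)
  hence an: "a ^ n = 1" by (simp add: vec_eq_iff vec_power_nth)
  have "\<phi> a = (\<lambda>x. x + scale (\<zeta>-1) (\<phi> u x))" unfolding a_def by (simp only: \<phi>_add \<phi>_scale unit) simp
  thus "(\<lambda>x. x + scale (\<zeta>-1) (\<phi> u x)) ^^ n = id" using pow[OF an] by simp
qed

lemma Q_idem: "\<phi> (axis i 1) (\<phi> (axis i 1) x) = \<phi> (axis i 1) x"
  by (rule idem01) (simp add: axis_def)

lemma Q_orth:
  assumes ij: "i \<noteq> j"
  shows "\<phi> (axis i 1) (\<phi> (axis j 1) x) = 0"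
proof -
  define A where "A = \<phi> (axis i 1)"
  define B where "B = \<phi> (axis j 1)"
  have AA: "A (A y) = A y" for y unfolding A_def by (rule Q_idem)
  have BB: "B (B y) = B y" for y unfolding B_def by (rule Q_idem)
  have S: "A (B y) + B (A y) = 0" for y
  proof -
    have u: "(axis i 1 + axis j (1::'k)) $ k = 0 \<or> (axis i 1 + axis j (1::'k)) $ k = 1" for k
      using ij by (simp add: axis_def)
    have phu: "\<phi> (axis i 1 + axis j 1) = (\<lambda>x. A x + B x)" by (simp add: \<phi>_add A_def B_def)
    have "A (A y + B y) + B (A y + B y) = A y + B y"
      using idem01[OF u, of y] by (simp add: phu)
    hence "A y + A (B y) + (B (A y) + B y) = A y + B y"
      by (simp only: A_def B_def lin_add) (simp only: AA[unfolded A_def] BB[unfolded B_def])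
    thus ?thesis by (simp add: algebra_simps)
  qed
  have comm: "A (B y) = B (A y)" for y
  proof -
    have h1: "B (A y) = - A (B y)" using S[of y] by (simp add: eq_neg_iff_add_eq_0 add.commute)
    have "A (B (A y)) = A (- A (B y))" by (simp only: h1)
    also have "\<dots> = - A (A (B y))" unfolding A_def by (rule lin_minus)
    finally have h2: "A (B (A y)) = - A (B y)" by (simp only: AA)
    have h3: "A (B (A y)) = - B (A y)" using S[of "A y"] by (simp add: AA eq_neg_iff_add_eq_0)
    show ?thesis using h2 h3 by simp
  qed
  obtain \<zeta> \<omega> :: 'k where z: "\<zeta>^n = 1" "\<omega>^n = 1" and c: "(\<zeta> + \<omega> - 1)^n \<noteq> 1"
    using affine_escape[of n] n_gt roots by auto
  define a where "a = 1 + (\<zeta> - 1) *s axis i 1 + (\<omega> - 1) *s axis j 1"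
  have "(a$k)^n = 1" for k using ij z by (auto simp: a_def axis_def)
  hence an: "a ^ n = 1" by (simp add: vec_eq_iff vec_power_nth)
  define T where "T = \<phi> a"
  have T: "T y = y + scale (\<zeta>-1) (A y) + scale (\<omega>-1) (B y)" for y
    unfolding T_def a_def A_def B_def by (simp only: \<phi>_add \<phi>_scale unit) simp
  define c where "c = \<zeta> + \<omega> - 1"
  have ET: "A (B (T y)) = scale c (A (B y))" for y
  proof -
    have "B (T y) = B y + scale (\<zeta>-1) (A (B y)) + scale (\<omega>-1) (B y)"
      unfolding T by (simp only: B_def lin_add lin_sc BB[unfolded B_def] comm[symmetric, unfolded B_def])
    hence "A (B (T y)) = A (B y) + scale (\<zeta>-1) (A (B y)) + scale (\<omega>-1) (A (B y))"
      by (simp only: A_def lin_add lin_sc) (simp only: AA[unfolded A_def])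
    also have "\<dots> = scale c (A (B y))" by (simp add: c_def algebra_simps)
    finally show ?thesis .
  qed
  have iter: "A (B ((T ^^ k) y)) = scale (c^k) (A (B y))" for k y
    by (induction k) (simp_all add: ET)
  have "(T ^^ n) = id" unfolding T_def by (rule pow[OF an])
  hence "A (B x) = scale (c^n) (A (B x))" using iter[of n x] by simp
  hence "scale (c^n - 1) (A (B x)) = 0" by (simp add: scale_left_diff_distrib)
  hence "A (B x) = 0" using c by (simp add: c_def)
  thus ?thesis by (simp add: A_def B_def)
qed

lemma rep: "\<phi> a = (\<lambda>x. \<Sum>i\<in>UNIV. scale (a$i) (\<phi> (axis i 1) x))"
proof -
  have "\<phi> a = \<phi> (\<Sum>i\<in>UNIV. (a$i) *s axis i 1)" by (simp add: basis_expansion)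
  also have "\<dots> = (\<lambda>x. \<Sum>i\<in>UNIV. scale (a$i) (\<phi> (axis i 1) x))" by (simp add: \<phi>_sum \<phi>_scale)
  finally show ?thesis .
qed

lemma mult_hom: "\<phi> (a * b) = \<phi> a \<circ> \<phi> b"
proof
  fix x
  have inner: "(\<Sum>j\<in>UNIV. scale (b$j) (\<phi> (axis i 1) (\<phi> (axis j 1) x))) = scale (b$i) (\<phi> (axis i 1) x)" for i
  proof -
    have "(\<Sum>j\<in>UNIV. scale (b$j) (\<phi> (axis i 1) (\<phi> (axis j 1) x)))
        = (\<Sum>j\<in>UNIV. if j = i then scale (b$i) (\<phi> (axis i 1) x) else 0)"
      by (intro sum.cong refl) (auto simp: Q_idem Q_orth)
    also have "\<dots> = scale (b$i) (\<phi> (axis i 1) x)" by simp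
    finally show ?thesis .
  qed
  have "(\<phi> a \<circ> \<phi> b) x = (\<Sum>i\<in>UNIV. scale (a$i) (\<Sum>j\<in>UNIV. scale (b$j) (\<phi> (axis i 1) (\<phi> (axis j 1) x))))"
    by (simp add: rep[of a] rep[of b] lin_sum lin_sc)
  also have "\<dots> = (\<Sum>i\<in>UNIV. scale ((a*b)$i) (\<phi> (axis i 1) x))"
    by (simp add: inner)
  also have "\<dots> = \<phi> (a * b) x" by (simp add: rep[of "a*b"])
  finally show "\<phi> (a * b) x = (\<phi> a \<circ> \<phi> b) x" by simp
qed

end

theorem theoremA:
  fixes scale :: "'k::field \<Rightarrow> 'm::ab_group_add \<Rightarrow> 'm"
    and \<phi> :: "'k ^ 'd \<Rightarrow> ('m \<Rightarrow> 'm)"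
    and n :: nat
  assumes M_fd: "\<exists>B. finite_dimensional_vector_space scale B"
    and \<phi>_End: "\<And>a. Vector_Spaces.linear scale scale (\<phi> a)"
    and \<phi>_add: "\<And>a b. \<phi> (a + b) = (\<lambda>x. \<phi> a x + \<phi> b x)"
    and \<phi>_scale: "\<And>c a. \<phi> (c *s a) = (\<lambda>x. scale c (\<phi> a x))"
    and n_gt: "n > 2"
    and roots: "card {z::'k. z ^ n = 1} = n"
    and unit: "\<phi> 1 = id"
    and pow: "\<And>a. a ^ n = 1 \<Longrightarrow> (\<phi> a) ^^ n = id"
  shows "\<phi> 1 = id \<and> (\<forall>a b. \<phi> (a * b) = \<phi> a \<circ> \<phi> b)"
proof -
  have VS: "vector_space scale" using \<phi>_End[of 0] by (simp add: Vector_Spaces.linear_iff)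
  have ctx: "thmctx scale \<phi> n"
    unfolding thmctx_def thmctx_axioms_def using VS \<phi>_End \<phi>_add \<phi>_scale n_gt roots unit pow by blast
  show ?thesis using unit thmctx.mult_hom[OF ctx] by blast
qed

end
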